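(* Let $R$ be a local ring and $s\in R$ a central element. The following are equivalent: (1) every $A\in M_2(R;s)$ with $A\notin U\big(M_2(R;s)\big)$ and $I_2-A\notin U\big(M_2(R;s)\big)$ is strongly nil clean; (2) every $A\in M_2(R;s)$ with $A\notin U\big(M_2(R;s)\big)$ and $I_2-A\notin U\big(M_2(R;s)\big)$ is strongly $J$-clean, and $J(R)$ is nil.
   Context: All rings are associative with identity. A ring $R$ is local if $R/J(R)$ is a division ring, where $J(R)$ is the Jacobson radical; $U(T)$ is the group of units and $Nil(T)$ the set of nilpotent elements of a ring $T$; $J(R)$ is nil if every element of it is nilpotent. For a ring $R$ and a central element $s\in R$, $M_2(R;s)$ denotes the ring whose elements are the $2\times 2$ arrays $\left[\begin{smallmatrix} a&b\\ c&d\end{smallmatrix}\right]$ with $a,b,c,d\in R$, with componentwise addition and multiplication $\left[\begin{smallmatrix} a&b\\ c&d\end{smallmatrix}\right]\left[\begin{smallmatrix} a'&b'\\ c'&d'\end{smallmatrix}\right]=\left[\begin{smallmatrix} aa'+s^2bc'&ab'+bd'\\ ca'+dc'&s^2cb'+dd'\end{smallmatrix}\right]$, with identity $I_2$. An element $a$ of a ring $T$ is strongly nil clean if there is an idempotent $e\in T$ with $ae=ea$ and $a-e\in Nil(T)$; it is strongly $J$-clean if there is an idempotent $e\in T$ with $ae=ea$ and $a-e\in J(T)$. *)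

theory Defs
  imports "HOL-Algebra.Algebra"
begin

definition left_ideal :: "('a, 'b) ring_scheme \<Rightarrow> 'a set \<Rightarrow> bool" where
  "left_ideal T I \<longleftrightarrow> I \<subseteq> carrier T \<and> \<zero>\<^bsub>T\<^esub> \<in> I
     \<and> (\<forall>x\<in>I. \<forall>y\<in>I. x \<oplus>\<^bsub>T\<^esub> y \<in> I)
     \<and> (\<forall>x\<in>I. \<ominus>\<^bsub>T\<^esub> x \<in> I)
     \<and> (\<forall>r\<in>carrier T. \<forall>x\<in>I. r \<otimes>\<^bsub>T\<^esub> x \<in> I)"

definition maximal_left_ideal :: "('a, 'b) ring_scheme \<Rightarrow> 'a set \<Rightarrow> bool" where
  "maximal_left_ideal T I \<longleftrightarrow> left_ideal T I \<and> I \<noteq> carrier T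
     \<and> (\<forall>K. left_ideal T K \<and> I \<subseteq> K \<longrightarrow> K = I \<or> K = carrier T)"

definition jacobson :: "('a, 'b) ring_scheme \<Rightarrow> 'a set" where
  "jacobson T = carrier T \<inter> \<Inter> {I. maximal_left_ideal T I}"

text \<open>R is local iff the quotient R/J(R) is a division ring: it is nonzero
  (1 not in J(R)) and every nonzero coset x + J(R) has a two-sided inverse y + J(R).\<close>
definition local_ring :: "('a, 'b) ring_scheme \<Rightarrow> bool" where
  "local_ring R \<longleftrightarrow> \<one>\<^bsub>R\<^esub> \<notin> jacobson R
     \<and> (\<forall>x\<in>carrier R - jacobson R. \<exists>y\<in>carrier R.
          x \<otimes>\<^bsub>R\<^esub> y \<ominus>\<^bsub>R\<^esub> \<one>\<^bsub>R\<^esub> \<in> jacobson R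
        \<and> y \<otimes>\<^bsub>R\<^esub> x \<ominus>\<^bsub>R\<^esub> \<one>\<^bsub>R\<^esub> \<in> jacobson R)"

definition nilpotents :: "('a, 'b) ring_scheme \<Rightarrow> 'a set" where
  "nilpotents T = {x \<in> carrier T. \<exists>n::nat. x [^]\<^bsub>T\<^esub> n = \<zero>\<^bsub>T\<^esub>}"

definition nil_jacobson :: "('a, 'b) ring_scheme \<Rightarrow> bool" where
  "nil_jacobson T \<longleftrightarrow> jacobson T \<subseteq> nilpotents T"

definition idempotent_elem :: "('a, 'b) ring_scheme \<Rightarrow> 'a \<Rightarrow> bool" where
  "idempotent_elem T e \<longleftrightarrow> e \<in> carrier T \<and> e \<otimes>\<^bsub>T\<^esub> e = e"

definition strongly_nil_clean :: "('a, 'b) ring_scheme \<Rightarrow> 'a \<Rightarrow> bool" where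
  "strongly_nil_clean T a \<longleftrightarrow> (\<exists>e. idempotent_elem T e
     \<and> a \<otimes>\<^bsub>T\<^esub> e = e \<otimes>\<^bsub>T\<^esub> a \<and> a \<ominus>\<^bsub>T\<^esub> e \<in> nilpotents T)"

definition strongly_J_clean :: "('a, 'b) ring_scheme \<Rightarrow> 'a \<Rightarrow> bool" where
  "strongly_J_clean T a \<longleftrightarrow> (\<exists>e. idempotent_elem T e
     \<and> a \<otimes>\<^bsub>T\<^esub> e = e \<otimes>\<^bsub>T\<^esub> a \<and> a \<ominus>\<^bsub>T\<^esub> e \<in> jacobson T)"

definition central_elem :: "('a, 'b) ring_scheme \<Rightarrow> 'a \<Rightarrow> bool" where
  "central_elem R s \<longleftrightarrow> s \<in> carrier R \<and> (\<forall>x\<in>carrier R. s \<otimes>\<^bsub>R\<^esub> x = x \<otimes>\<^bsub>R\<^esub> s)"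

definition M2s_mult :: "('a, 'b) ring_scheme \<Rightarrow> 'a \<Rightarrow> 'a \<times> 'a \<times> 'a \<times> 'a \<Rightarrow> 'a \<times> 'a \<times> 'a \<times> 'a \<Rightarrow> 'a \<times> 'a \<times> 'a \<times> 'a" where
  "M2s_mult R s = (\<lambda>(a,b,c,d) (a',b',c',d').
        (a \<otimes>\<^bsub>R\<^esub> a' \<oplus>\<^bsub>R\<^esub> (s \<otimes>\<^bsub>R\<^esub> s) \<otimes>\<^bsub>R\<^esub> b \<otimes>\<^bsub>R\<^esub> c',
         a \<otimes>\<^bsub>R\<^esub> b' \<oplus>\<^bsub>R\<^esub> b \<otimes>\<^bsub>R\<^esub> d',
         c \<otimes>\<^bsub>R\<^esub> a' \<oplus>\<^bsub>R\<^esub> d \<otimes>\<^bsub>R\<^esub> c',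
         (s \<otimes>\<^bsub>R\<^esub> s) \<otimes>\<^bsub>R\<^esub> c \<otimes>\<^bsub>R\<^esub> b' \<oplus>\<^bsub>R\<^esub> d \<otimes>\<^bsub>R\<^esub> d'))"

definition M2s_add :: "('a, 'b) ring_scheme \<Rightarrow> 'a \<times> 'a \<times> 'a \<times> 'a \<Rightarrow> 'a \<times> 'a \<times> 'a \<times> 'a \<Rightarrow> 'a \<times> 'a \<times> 'a \<times> 'a" where
  "M2s_add R = (\<lambda>(a,b,c,d) (a',b',c',d').
        (a \<oplus>\<^bsub>R\<^esub> a', b \<oplus>\<^bsub>R\<^esub> b', c \<oplus>\<^bsub>R\<^esub> c', d \<oplus>\<^bsub>R\<^esub> d'))"

text \<open>The generalized matrix ring M_2(R;s); an array [[a,b],[c,d]] is the tuple (a,b,c,d).\<close>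
definition M2s :: "('a, 'b) ring_scheme \<Rightarrow> 'a \<Rightarrow> ('a \<times> 'a \<times> 'a \<times> 'a) ring" where
  "M2s R s = \<lparr> carrier = carrier R \<times> carrier R \<times> carrier R \<times> carrier R,
     monoid.mult = M2s_mult R s,
     one = (\<one>\<^bsub>R\<^esub>, \<zero>\<^bsub>R\<^esub>, \<zero>\<^bsub>R\<^esub>, \<one>\<^bsub>R\<^esub>),
     ring.zero = (\<zero>\<^bsub>R\<^esub>, \<zero>\<^bsub>R\<^esub>, \<zero>\<^bsub>R\<^esub>, \<zero>\<^bsub>R\<^esub>),
     ring.add = M2s_add R \<rparr>"

end

theory Submission
  imports Defs
begin
locale m2 = ring R for R (structure) + fixes s assumes s_central: "central_elem R s"
begin
lemma s_car[simp]: "s \<in> carrier R" using s_central by (simp add: central_elem_def)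
lemma s_comm: "x \<in> carrier R \<Longrightarrow> s \<otimes> x = x \<otimes> s" using s_central by (simp add: central_elem_def)

definition sc :: "'a \<Rightarrow> 'a" where "sc x = (s \<otimes> s) \<otimes> x"

lemma sc_closed[simp]: "x \<in> carrier R \<Longrightarrow> sc x \<in> carrier R" by (simp add: sc_def)
lemma sc_mr[simp]: "x \<in> carrier R \<Longrightarrow> y \<in> carrier R \<Longrightarrow> x \<otimes> sc y = sc (x \<otimes> y)"
  unfolding sc_def by (metis m_assoc s_car s_comm m_closed)
lemma sc_ml[simp]: "x \<in> carrier R \<Longrightarrow> y \<in> carrier R \<Longrightarrow> sc x \<otimes> y = sc (x \<otimes> y)"
  unfolding sc_def by (simp add: m_assoc)
lemma sc_add[simp]: "x \<in> carrier R \<Longrightarrow> y \<in> carrier R \<Longrightarrow> sc (x \<oplus> y) = sc x \<oplus> sc y"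
  unfolding sc_def by (simp add: r_distr)
lemma sc_neg[simp]: "x \<in> carrier R \<Longrightarrow> sc (\<ominus> x) = \<ominus> sc x"
  unfolding sc_def by (simp add: r_minus)
lemma sc_zero[simp]: "sc \<zero> = \<zero>" unfolding sc_def by simp

abbreviation T where "T \<equiv> M2s R s"

lemma T_mult: "a \<in> carrier R \<Longrightarrow> b \<in> carrier R \<Longrightarrow> c \<in> carrier R \<Longrightarrow> d \<in> carrier R \<Longrightarrow>
  a' \<in> carrier R \<Longrightarrow> b' \<in> carrier R \<Longrightarrow> c' \<in> carrier R \<Longrightarrow> d' \<in> carrier R \<Longrightarrow> (a,b,c,d) \<otimes>\<^bsub>T\<^esub> (a',b',c',d') =
   (a\<otimes>a' \<oplus> sc (b\<otimes>c'), a\<otimes>b' \<oplus> b\<otimes>d', c\<otimes>a' \<oplus> d\<otimes>c', sc (c\<otimes>b') \<oplus> d\<otimes>d')"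
  by (simp add: M2s_def M2s_mult_def sc_def m_assoc)
lemma T_add: "(a,b,c,d) \<oplus>\<^bsub>T\<^esub> (a',b',c',d') = (a\<oplus>a', b\<oplus>b', c\<oplus>c', d\<oplus>d')"
  by (simp add: M2s_def M2s_add_def)
lemma T_one: "\<one>\<^bsub>T\<^esub> = (\<one>,\<zero>,\<zero>,\<one>)" by (simp add: M2s_def)
lemma T_zero: "\<zero>\<^bsub>T\<^esub> = (\<zero>,\<zero>,\<zero>,\<zero>)" by (simp add: M2s_def)
lemma T_carrier: "carrier T = carrier R \<times> carrier R \<times> carrier R \<times> carrier R" by (simp add: M2s_def)

lemmas Tsimps = T_mult T_add T_one T_zero T_carrier

lemma T_ring: "ring T"
proof (rule ringI)
  show "abelian_group T"
    apply (rule abelian_groupI)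
    apply (auto simp: Tsimps a_ac)
    done
  show "monoid T"
    apply (rule monoidI)
    apply (auto simp: Tsimps m_assoc l_distr r_distr a_ac)
    done
qed (auto simp: Tsimps m_assoc l_distr r_distr a_ac)

end
context ring
begin

lemma maxl_left_ideal: "maximal_left_ideal R I \<Longrightarrow> left_ideal R I"
  by (simp add: maximal_left_ideal_def)

lemma jac_left_ideal: "left_ideal R (jacobson R)"
  unfolding left_ideal_def jacobson_def
  by (auto simp: maximal_left_ideal_def left_ideal_def)

lemma jac_carrier: "jacobson R \<subseteq> carrier R" by (auto simp: jacobson_def)

lemma jac_mult: "x \<in> jacobson R \<Longrightarrow> r \<in> carrier R \<Longrightarrow> r \<otimes> x \<in> jacobson R"
  using jac_left_ideal by (simp add: left_ideal_def)
lemma jac_add: "x \<in> jacobson R \<Longrightarrow> y \<in> jacobson R \<Longrightarrow> x \<oplus> y \<in> jacobson R"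
  using jac_left_ideal by (simp add: left_ideal_def)
lemma jac_neg: "x \<in> jacobson R \<Longrightarrow> \<ominus> x \<in> jacobson R"
  using jac_left_ideal by (simp add: left_ideal_def)
lemma jac_zero: "\<zero> \<in> jacobson R"
  using jac_left_ideal by (simp add: left_ideal_def)

lemma left_ideal_one: "left_ideal R K \<Longrightarrow> \<one> \<in> K \<Longrightarrow> K = carrier R"
  unfolding left_ideal_def by (metis r_one subsetI subset_antisym)

lemma jac_left_inv:
  assumes x: "x \<in> jacobson R" and y: "y \<in> carrier R"
  shows "\<exists>z\<in>carrier R. z \<otimes> (\<one> \<ominus> y \<otimes> x) = \<one>"
proof (rule ccontr)
  assume no: "\<not> ?thesis"
  have xc: "x \<in> carrier R" using x jac_carrier by auto
  define a where "a = \<one> \<ominus> y \<otimes> x"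
  have ac: "a \<in> carrier R" using xc y by (simp add: a_def)
  define L where "L = {t \<otimes> a | t. t \<in> carrier R}"
  have L1: "\<one> \<notin> L" using no by (auto simp: L_def a_def)
  have Lid: "left_ideal R L"
    unfolding left_ideal_def L_def
  proof (intro conjI ballI)
    show "{t \<otimes> a |t. t \<in> carrier R} \<subseteq> carrier R" using ac by auto
    show "\<zero> \<in> {t \<otimes> a |t. t \<in> carrier R}" using ac by (auto intro!: exI[of _ \<zero>])
    fix u v assume "u \<in> {t \<otimes> a |t. t \<in> carrier R}" "v \<in> {t \<otimes> a |t. t \<in> carrier R}"
    then obtain t1 t2 where "u = t1 \<otimes> a" "v = t2 \<otimes> a" "t1 \<in> carrier R" "t2 \<in> carrier R" by auto
    then show "u \<oplus> v \<in> {t \<otimes> a |t. t \<in> carrier R}" using ac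
      by (auto intro!: exI[of _ "t1 \<oplus> t2"] simp: l_distr)
  next
    fix u assume "u \<in> {t \<otimes> a |t. t \<in> carrier R}"
    then obtain t1 where "u = t1 \<otimes> a" "t1 \<in> carrier R" by auto
    then show "\<ominus> u \<in> {t \<otimes> a |t. t \<in> carrier R}" using ac
      by (auto intro!: exI[of _ "\<ominus> t1"] simp: l_minus)
  next
    fix r u assume "r \<in> carrier R" "u \<in> {t \<otimes> a |t. t \<in> carrier R}"
    then obtain t1 where "u = t1 \<otimes> a" "t1 \<in> carrier R" by auto
    then show "r \<otimes> u \<in> {t \<otimes> a |t. t \<in> carrier R}" using ac \<open>r \<in> carrier R\<close>
      by (auto intro!: exI[of _ "r \<otimes> t1"] simp: m_assoc)
  qed
  define SS where "SS = {K. left_ideal R K \<and> L \<subseteq> K \<and> \<one> \<notin> K}"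
  have "\<exists>M\<in>SS. \<forall>Y\<in>SS. M \<subseteq> Y \<longrightarrow> Y = M"
  proof (rule subset_Zorn_nonempty)
    show "SS \<noteq> {}" using Lid L1 by (auto simp: SS_def)
  next
    fix C assume Cne: "C \<noteq> {}" and ch: "subset.chain SS C"
    have CS: "C \<subseteq> SS" and cmp: "\<And>P1 P2. P1 \<in> C \<Longrightarrow> P2 \<in> C \<Longrightarrow> P1 \<subseteq> P2 \<or> P2 \<subseteq> P1"
      using ch by (auto simp: subset.chain_def)
    have li: "\<And>P1. P1 \<in> C \<Longrightarrow> left_ideal R P1" using CS by (auto simp: SS_def)
    have "left_ideal R (\<Union>C)"
      unfolding left_ideal_def
    proof (intro conjI ballI)
      show "\<Union> C \<subseteq> carrier R" using li unfolding left_ideal_def by blast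
      show "\<zero> \<in> \<Union> C" using li Cne by (auto simp: left_ideal_def)
      fix u v assume "u \<in> \<Union>C" "v \<in> \<Union>C"
      then obtain P1 P2 where XY: "P1 \<in> C" "P2 \<in> C" "u \<in> P1" "v \<in> P2" by auto
      show "u \<oplus> v \<in> \<Union>C"
      proof (cases "P1 \<subseteq> P2")
        case True
        then have "u \<oplus> v \<in> P2" using XY li[of P2] unfolding left_ideal_def by blast
        then show ?thesis using XY by blast
      next
        case False
        then have "u \<oplus> v \<in> P1" using cmp[OF XY(1,2)] XY li[of P1] unfolding left_ideal_def by blast
        then show ?thesis using XY by blast
      qed
    next
      fix u assume "u \<in> \<Union>C" then show "\<ominus> u \<in> \<Union>C" using li by (auto simp: left_ideal_def)
    next
      fix r u assume r: "r \<in> carrier R" and "u \<in> \<Union>C"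
      then obtain P1 where "P1 \<in> C" "u \<in> P1" by auto
      then have "r \<otimes> u \<in> P1" using li[of P1] r unfolding left_ideal_def by blast
      then show "r \<otimes> u \<in> \<Union>C" using \<open>P1 \<in> C\<close> by blast
    qed
    moreover have "L \<subseteq> \<Union>C" using Cne CS by (auto simp: SS_def)
    moreover have "\<one> \<notin> \<Union>C" using CS by (auto simp: SS_def)
    ultimately show "\<Union>C \<in> SS" by (simp add: SS_def)
  qed
  then obtain M where MS: "M \<in> SS" and Mmax: "\<forall>Y\<in>SS. M \<subseteq> Y \<longrightarrow> Y = M" by blast
  have Mli: "left_ideal R M" and LM: "L \<subseteq> M" and M1: "\<one> \<notin> M" using MS by (auto simp: SS_def)
  have "maximal_left_ideal R M"
    unfolding maximal_left_ideal_def
  proof (intro conjI allI impI)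
    show "left_ideal R M" by fact
    show "M \<noteq> carrier R" using M1 by auto
    fix K assume K: "left_ideal R K \<and> M \<subseteq> K"
    show "K = M \<or> K = carrier R"
    proof (cases "\<one> \<in> K")
      case True then show ?thesis using K left_ideal_one by blast
    next
      case False then have "K \<in> SS" using K LM by (auto simp: SS_def)
      then show ?thesis using Mmax K by blast
    qed
  qed
  then have xM: "x \<in> M" using x by (auto simp: jacobson_def)
  have "y \<otimes> x \<in> M" using Mli xM y by (simp add: left_ideal_def)
  moreover have "a \<in> M" using LM ac by (auto simp: L_def intro!: exI[of _ \<one>])
  ultimately have "a \<oplus> y \<otimes> x \<in> M" using Mli by (simp add: left_ideal_def)
  moreover have "a \<oplus> y \<otimes> x = \<one>" using xc y by (simp add: a_def minus_eq a_assoc l_neg)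
  ultimately show False using M1 by simp
qed

lemma jac_one_minus_unit:
  assumes j: "j \<in> jacobson R" shows "\<one> \<ominus> j \<in> Units R"
proof -
  have jc: "j \<in> carrier R" using j jac_carrier by auto
  obtain z where z: "z \<in> carrier R" "z \<otimes> (\<one> \<ominus> j) = \<one>"
    using jac_left_inv[OF j one_closed] jc by auto
  have zj: "\<ominus> (z \<otimes> j) \<in> jacobson R" using jac_mult[OF j z(1)] jac_neg by blast
  obtain z' where z': "z' \<in> carrier R" "z' \<otimes> (\<one> \<ominus> \<ominus> (z \<otimes> j)) = \<one>"
    using jac_left_inv[OF zj one_closed] jc z by auto
  have "z = z \<otimes> (\<one> \<ominus> j) \<oplus> z \<otimes> j" using z(1) jc
    by (simp add: minus_eq r_distr r_minus a_assoc l_neg)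
  also have "\<dots> = \<one> \<ominus> \<ominus> (z \<otimes> j)" using z jc by (simp add: minus_eq)
  finally have zz: "z = \<one> \<ominus> \<ominus> (z \<otimes> j)" .
  have z'z: "z' \<otimes> z = \<one>" using z' zz by simp
  have "z' = z' \<otimes> (z \<otimes> (\<one> \<ominus> j))" using z z' by simp
  also have "\<dots> = (z' \<otimes> z) \<otimes> (\<one> \<ominus> j)" using z z' jc by (simp add: m_assoc)
  also have "\<dots> = \<one> \<ominus> j" using jc by (simp add: z'z)
  finally have "z' = \<one> \<ominus> j" .
  then have "(\<one> \<ominus> j) \<otimes> z = \<one>" using z'z by simp
  then show ?thesis using z jc unfolding Units_def by auto
qed

lemma jac_char: "jacobson R = {x \<in> carrier R. \<forall>y\<in>carrier R. \<one> \<ominus> y \<otimes> x \<in> Units R}"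
proof
  show "jacobson R \<subseteq> {x \<in> carrier R. \<forall>y\<in>carrier R. \<one> \<ominus> y \<otimes> x \<in> Units R}"
  proof
    fix x assume x: "x \<in> jacobson R"
    have "x \<in> carrier R" by (rule subsetD[OF jac_carrier x])
    moreover have "\<forall>y\<in>carrier R. \<one> \<ominus> y \<otimes> x \<in> Units R"
    proof
      fix y assume "y \<in> carrier R"
      then have "y \<otimes> x \<in> jacobson R" using x by (intro jac_mult)
      then show "\<one> \<ominus> y \<otimes> x \<in> Units R" by (rule jac_one_minus_unit)
    qed
    ultimately show "x \<in> {x \<in> carrier R. \<forall>y\<in>carrier R. \<one> \<ominus> y \<otimes> x \<in> Units R}" by blast
  qed
next
  show "{x \<in> carrier R. \<forall>y\<in>carrier R. \<one> \<ominus> y \<otimes> x \<in> Units R} \<subseteq> jacobson R"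
  proof (clarify)
    fix x assume xc: "x \<in> carrier R" and H: "\<forall>y\<in>carrier R. \<one> \<ominus> y \<otimes> x \<in> Units R"
    show "x \<in> jacobson R" unfolding jacobson_def
    proof (intro IntI InterI CollectI xc)
      fix M assume "M \<in> {I. maximal_left_ideal R I}"
      then have Mm: "maximal_left_ideal R M" by simp
      then have Mli: "left_ideal R M" and Mne: "M \<noteq> carrier R"
        and Mmax: "\<And>K. left_ideal R K \<Longrightarrow> M \<subseteq> K \<Longrightarrow> K = M \<or> K = carrier R"
        by (auto simp: maximal_left_ideal_def)
      have Mc: "M \<subseteq> carrier R" using Mli by (simp add: left_ideal_def)
      show "x \<in> M"
      proof (rule ccontr)
        assume xM: "x \<notin> M"
        define K where "K = {m \<oplus> t \<otimes> x | m t. m \<in> M \<and> t \<in> carrier R}"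
        have Kli: "left_ideal R K"
          unfolding left_ideal_def
        proof (intro conjI ballI)
          show "K \<subseteq> carrier R" using Mc xc by (auto simp: K_def)
          have "\<zero> = \<zero> \<oplus> \<zero> \<otimes> x" "\<zero> \<in> M" "\<zero> \<in> carrier R" using Mli xc by (auto simp: left_ideal_def)
          then show "\<zero> \<in> K" unfolding K_def by blast
          fix u v assume "u \<in> K" "v \<in> K"
          then obtain m1 t1 m2 t2 where "u = m1 \<oplus> t1 \<otimes> x" "v = m2 \<oplus> t2 \<otimes> x"
            "m1 \<in> M" "m2 \<in> M" "t1 \<in> carrier R" "t2 \<in> carrier R" by (auto simp: K_def)
          moreover then have "m1 \<oplus> m2 \<in> M" using Mli by (simp add: left_ideal_def)
          moreover have "m1 \<in> carrier R" "m2 \<in> carrier R" using Mc calculation by auto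
          moreover have "u \<oplus> v = (m1 \<oplus> m2) \<oplus> (t1 \<oplus> t2) \<otimes> x" using calculation xc by (simp add: l_distr a_ac)
          ultimately show "u \<oplus> v \<in> K" using xc unfolding K_def by blast
        next
          fix u assume "u \<in> K"
          then obtain m1 t1 where "u = m1 \<oplus> t1 \<otimes> x" "m1 \<in> M" "t1 \<in> carrier R" by (auto simp: K_def)
          moreover then have "\<ominus> m1 \<in> M" using Mli by (simp add: left_ideal_def)
          moreover have "m1 \<in> carrier R" using Mc calculation by auto
          moreover have "\<ominus> u = (\<ominus> m1) \<oplus> (\<ominus> t1) \<otimes> x" using calculation xc by (simp add: l_minus minus_add)
          ultimately show "\<ominus> u \<in> K" using xc unfolding K_def by blast
        next
          fix r u assume r: "r \<in> carrier R" and "u \<in> K"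
          then obtain m1 t1 where "u = m1 \<oplus> t1 \<otimes> x" "m1 \<in> M" "t1 \<in> carrier R" by (auto simp: K_def)
          moreover then have "r \<otimes> m1 \<in> M" using Mli r by (simp add: left_ideal_def)
          moreover have "m1 \<in> carrier R" using Mc calculation by auto
          moreover have "r \<otimes> u = (r \<otimes> m1) \<oplus> (r \<otimes> t1) \<otimes> x" using calculation xc r by (simp add: r_distr m_assoc)
          ultimately show "r \<otimes> u \<in> K" using xc r unfolding K_def by blast
        qed
        have MK: "M \<subseteq> K"
        proof
          fix m assume "m \<in> M"
          then have "m = m \<oplus> \<zero> \<otimes> x" "m \<in> M" "\<zero> \<in> carrier R" using Mc xc by auto
          then show "m \<in> K" unfolding K_def by blast
        qed
        have "x = \<zero> \<oplus> \<one> \<otimes> x" using xc by simp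
        then have xK: "x \<in> K" using Mli xc unfolding K_def left_ideal_def by blast
        have "K = carrier R" using Mmax[OF Kli MK] xK xM by auto
        then have "\<one> \<in> K" by simp
        then obtain m t where mt: "\<one> = m \<oplus> t \<otimes> x" "m \<in> M" "t \<in> carrier R" by (auto simp: K_def)
        have mc: "m \<in> carrier R" using mt Mc by auto
        have "m = (m \<oplus> t \<otimes> x) \<oplus> \<ominus> (t \<otimes> x)" using mc mt xc by (simp add: a_assoc r_neg)
        then have mm: "m = \<one> \<ominus> t \<otimes> x" using mt(1)[symmetric] by (simp add: minus_eq)
        have mU: "m \<in> Units R" using H mt(3) mm by simp
        have "inv m \<otimes> m \<in> M" using Mli mt(2) Units_inv_closed[OF mU] unfolding left_ideal_def by blast
        then have "\<one> \<in> M" using mU by simp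
        then show False using left_ideal_one[OF Mli] Mne by simp
      qed
    qed
  qed
qed

lemma nilp_one_minus_unit:
  assumes n: "n \<in> carrier R" and k: "n [^] (k::nat) = \<zero>"
  shows "\<one> \<ominus> n \<in> Units R"
proof -
  have "\<exists>g\<in>carrier R. (\<one> \<ominus> n) \<otimes> g = \<one> \<ominus> n [^] m \<and> g \<otimes> (\<one> \<ominus> n) = \<one> \<ominus> n [^] m" for m :: nat
  proof (induction m)
    case 0 then show ?case by (auto intro!: bexI[of _ \<zero>] simp: n minus_eq r_neg)
  next
    case (Suc m)
    then obtain g where g: "g \<in> carrier R" "(\<one> \<ominus> n) \<otimes> g = \<one> \<ominus> n [^] m" "g \<otimes> (\<one> \<ominus> n) = \<one> \<ominus> n [^] m" by blast
    have c1: "n \<otimes> ((\<one> \<ominus> n) \<otimes> g) = (\<one> \<ominus> n) \<otimes> (n \<otimes> g)" using n g(1)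
      by (simp add: m_assoc[symmetric] minus_eq r_distr l_distr r_minus l_minus)
    have "(\<one> \<ominus> n) \<otimes> (\<one> \<oplus> n \<otimes> g) = \<one> \<ominus> n \<oplus> n \<otimes> ((\<one> \<ominus> n) \<otimes> g)"
      using n g c1 by (simp add: r_distr)
    also have "\<dots> = \<one> \<ominus> n \<oplus> n \<otimes> (\<one> \<ominus> n [^] m)" by (simp only: g(2))
    also have "\<dots> = \<one> \<ominus> n [^] Suc m" using n g(1) nat_pow_closed[OF n, of m] unfolding nat_pow_Suc2[OF n]
      by (simp add: minus_eq r_distr r_minus a_assoc r_neg1)
    finally have e1: "(\<one> \<ominus> n) \<otimes> (\<one> \<oplus> n \<otimes> g) = \<one> \<ominus> n [^] Suc m" .
    have "(\<one> \<oplus> n \<otimes> g) \<otimes> (\<one> \<ominus> n) = \<one> \<ominus> n \<oplus> n \<otimes> (g \<otimes> (\<one> \<ominus> n))"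
      using n g by (simp add: l_distr m_assoc)
    also have "\<dots> = \<one> \<ominus> n \<oplus> n \<otimes> (\<one> \<ominus> n [^] m)" by (simp only: g(3))
    also have "\<dots> = \<one> \<ominus> n [^] Suc m" using n g(1) nat_pow_closed[OF n, of m] unfolding nat_pow_Suc2[OF n]
      by (simp add: minus_eq r_distr r_minus a_assoc r_neg1)
    finally have e2: "(\<one> \<oplus> n \<otimes> g) \<otimes> (\<one> \<ominus> n) = \<one> \<ominus> n [^] Suc m" .
    show ?case using e1 e2 g n by (intro bexI[of _ "\<one> \<oplus> n \<otimes> g"]) auto
  qed
  from this[of k] obtain g where "g \<in> carrier R" "(\<one> \<ominus> n) \<otimes> g = \<one>" "g \<otimes> (\<one> \<ominus> n) = \<one>"
    using k by (auto simp: minus_eq)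
  then show ?thesis using n unfolding Units_def by auto
qed

lemma one_plus_minus: "z \<in> carrier R \<Longrightarrow> \<one> \<oplus> (z \<oplus> \<ominus> \<one>) = z"
proof -
  assume z: "z \<in> carrier R"
  have "\<one> \<oplus> (z \<oplus> \<ominus> \<one>) = z \<oplus> (\<one> \<oplus> \<ominus> \<one>)" using a_lcomm[OF one_closed z a_inv_closed[OF one_closed]] .
  also have "\<dots> = z" using z by (simp add: r_neg)
  finally show ?thesis .
qed

lemma idem_unit_one: "e \<in> Units R \<Longrightarrow> e \<otimes> e = e \<Longrightarrow> e = \<one>"
proof -
  assume e: "e \<in> Units R" "e \<otimes> e = e"
  have "e = inv e \<otimes> (e \<otimes> e)" using e(1) by (simp add: m_assoc[symmetric] Units_closed)
  also have "\<dots> = \<one>" using e by simp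
  finally show ?thesis .
qed

end
locale lring = ring R for R (structure) + assumes loc: "local_ring R"
begin

abbreviation JR where "JR \<equiv> jacobson R"

lemma one_notin_J: "\<one> \<notin> JR" using loc by (simp add: local_ring_def)

lemma one_ne_zero: "\<one> \<noteq> \<zero>" using one_notin_J jac_zero by auto

lemma J_not_unit: "x \<in> JR \<Longrightarrow> x \<notin> Units R"
proof
  assume "x \<in> JR" "x \<in> Units R"
  then have "inv x \<otimes> x \<in> JR" by (intro jac_mult) auto
  then show False using \<open>x \<in> Units R\<close> one_notin_J by simp
qed

lemma notJ_unit: assumes x: "x \<in> carrier R" "x \<notin> JR" shows "x \<in> Units R"
proof -
  obtain y where y: "y \<in> carrier R" "x \<otimes> y \<ominus> \<one> \<in> JR" "y \<otimes> x \<ominus> \<one> \<in> JR"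
    using loc x unfolding local_ring_def by blast
  have u1: "x \<otimes> y \<in> Units R"
  proof -
    have "x \<otimes> y = \<one> \<ominus> \<ominus> (x \<otimes> y \<ominus> \<one>)" using x y one_plus_minus[of "x \<otimes> y"] by (simp add: minus_eq)
    then show ?thesis using jac_one_minus_unit[OF jac_neg[OF y(2)]] by simp
  qed
  have u2: "y \<otimes> x \<in> Units R"
  proof -
    have "y \<otimes> x = \<one> \<ominus> \<ominus> (y \<otimes> x \<ominus> \<one>)" using x y one_plus_minus[of "y \<otimes> x"] by (simp add: minus_eq)
    then show ?thesis using jac_one_minus_unit[OF jac_neg[OF y(3)]] by simp
  qed
  define a where "a = inv (y \<otimes> x) \<otimes> y"
  define b where "b = y \<otimes> inv (x \<otimes> y)"
  have ac: "a \<in> carrier R" and bc: "b \<in> carrier R" using u1 u2 y by (auto simp: a_def b_def)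
  have ax: "a \<otimes> x = \<one>" using u2 x y by (simp add: a_def m_assoc)
  have xb: "x \<otimes> b = \<one>" using u1 x y by (simp add: b_def m_assoc[symmetric])
  have "a = a \<otimes> (x \<otimes> b)" using xb ac by simp
  also have "\<dots> = b" using ac bc x by (simp add: m_assoc[symmetric] ax)
  finally have "a = b" .
  then show ?thesis using ax xb ac x unfolding Units_def by auto
qed

lemma unit_iff: "x \<in> carrier R \<Longrightarrow> x \<in> Units R \<longleftrightarrow> x \<notin> JR"
  using J_not_unit notJ_unit by blast

lemma J_right: assumes x: "x \<in> JR" and r: "r \<in> carrier R" shows "x \<otimes> r \<in> JR"
proof (rule ccontr)
  assume n: "x \<otimes> r \<notin> JR"
  have xc: "x \<in> carrier R" using x jac_carrier by auto
  then have u: "x \<otimes> r \<in> Units R" using notJ_unit n r by auto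
  define z where "z = r \<otimes> inv (x \<otimes> r)"
  have zc: "z \<in> carrier R" using u r by (simp add: z_def)
  have xz: "x \<otimes> z = \<one>" using u r xc by (simp add: z_def m_assoc[symmetric])
  have "z \<notin> JR"
  proof
    assume "z \<in> JR" then have "x \<otimes> z \<in> JR" using jac_mult xc by auto
    then show False using xz one_notin_J by simp
  qed
  then have zu: "z \<in> Units R" using notJ_unit zc by auto
  have "x = x \<otimes> z \<otimes> inv z" using zu xc zc by (simp add: m_assoc)
  also have "\<dots> = inv z" using xz zu by simp
  finally have "x \<in> Units R" using zu by simp
  then show False using J_not_unit x by auto
qed

lemma prod_one_units: assumes "x \<in> carrier R" "y \<in> carrier R" "x \<otimes> y = \<one>"
  shows "x \<in> Units R" "y \<in> Units R"
proof -
  show "x \<in> Units R"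
  proof (rule notJ_unit[OF assms(1)])
    show "x \<notin> JR"
    proof
      assume "x \<in> JR" then have "x \<otimes> y \<in> JR" using assms(2) by (rule J_right)
      then show False using assms(3) one_notin_J by simp
    qed
  qed
  show "y \<in> Units R"
  proof (rule notJ_unit[OF assms(2)])
    show "y \<notin> JR"
    proof
      assume "y \<in> JR" then have "x \<otimes> y \<in> JR" using assms(1) by (rule jac_mult)
      then show False using assms(3) one_notin_J by simp
    qed
  qed
qed

lemma nilp_J: assumes x: "x \<in> carrier R" and k: "x [^] (k::nat) = \<zero>" shows "x \<in> JR"
proof (rule ccontr)
  assume "x \<notin> JR" then have "x \<in> Units R" using notJ_unit x by auto
  then have "x [^] k \<in> Units R" by (induction k) auto
  then have "\<zero> \<in> Units R" using k by simp
  then have "\<zero> \<in> JR \<Longrightarrow> False" using J_not_unit by blast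
  then show False using jac_zero by blast
qed

lemma nilp_J': "x \<in> nilpotents R \<Longrightarrow> x \<in> JR"
  using nilp_J by (auto simp: nilpotents_def)

lemma idem01: assumes p: "p \<in> carrier R" "p \<otimes> p = p" shows "p = \<zero> \<or> p = \<one>"
proof (cases "p \<in> JR")
  case True
  then have "\<one> \<ominus> p \<in> Units R" using jac_one_minus_unit by simp
  have "p \<otimes> (\<one> \<ominus> p) = \<zero>" using p by (simp add: minus_eq r_distr r_minus r_neg)
  have "p = p \<otimes> ((\<one> \<ominus> p) \<otimes> inv (\<one> \<ominus> p))" using p \<open>\<one> \<ominus> p \<in> Units R\<close> by simp
  also have "\<dots> = (p \<otimes> (\<one> \<ominus> p)) \<otimes> inv (\<one> \<ominus> p)" using p \<open>\<one> \<ominus> p \<in> Units R\<close> by (simp add: m_assoc)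
  also have "\<dots> = \<zero>" using \<open>\<one> \<ominus> p \<in> Units R\<close> \<open>p \<otimes> (\<one> \<ominus> p) = \<zero>\<close> by simp
  finally have "p = \<zero>" .
  then show ?thesis by simp
next
  case False
  then have u: "p \<in> Units R" using notJ_unit p by auto
  then show ?thesis using p idem_unit_one by blast
qed

lemma unit_add_J: assumes u: "u \<in> Units R" and j: "j \<in> JR" shows "u \<oplus> j \<in> Units R"
proof -
  have uc: "u \<in> carrier R" and jc: "j \<in> carrier R" using u j jac_carrier by auto
  have "u \<oplus> j \<notin> JR"
  proof
    assume "u \<oplus> j \<in> JR"
    then have "(u \<oplus> j) \<oplus> \<ominus> j \<in> JR" using jac_add jac_neg j by blast
    then have "u \<in> JR" using uc jc by (simp add: a_assoc r_neg)
    then show False using u J_not_unit by blast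
  qed
  then show ?thesis using notJ_unit uc jc by auto
qed

lemma J_closed: "x \<in> JR \<Longrightarrow> x \<in> carrier R" using jac_carrier by auto

lemma J_mult_both: "x \<in> JR \<Longrightarrow> a \<in> carrier R \<Longrightarrow> b \<in> carrier R \<Longrightarrow> a \<otimes> x \<otimes> b \<in> JR"
  using jac_mult J_right by auto

end
context ring
begin
lemma inv_cancel1[simp]: "P \<in> Units R \<Longrightarrow> x \<in> carrier R \<Longrightarrow> inv P \<otimes> (P \<otimes> x) = x"
  by (simp add: m_assoc[symmetric] Units_closed)
lemma inv_cancel2[simp]: "P \<in> Units R \<Longrightarrow> x \<in> carrier R \<Longrightarrow> P \<otimes> (inv P \<otimes> x) = x"
  by (simp add: m_assoc[symmetric] Units_closed)

lemma conj_jac: assumes P: "P \<in> Units R" and w: "w \<in> jacobson R"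
  shows "inv P \<otimes> w \<otimes> P \<in> jacobson R"
proof -
  have wc: "w \<in> carrier R" using w jac_carrier by auto
  have Pc: "P \<in> carrier R" "inv P \<in> carrier R" using P by auto
  have "\<one> \<ominus> y \<otimes> (inv P \<otimes> w \<otimes> P) \<in> Units R" if y: "y \<in> carrier R" for y
  proof -
    have "\<one> \<ominus> (P \<otimes> y \<otimes> inv P) \<otimes> w \<in> Units R"
      using w jac_char y Pc by auto
    then have "inv P \<otimes> (\<one> \<ominus> (P \<otimes> y \<otimes> inv P) \<otimes> w) \<otimes> P \<in> Units R" using P by auto
    moreover have "inv P \<otimes> (\<one> \<ominus> (P \<otimes> y \<otimes> inv P) \<otimes> w) \<otimes> P = \<one> \<ominus> y \<otimes> (inv P \<otimes> w \<otimes> P)"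
      using Pc wc y P by (simp add: minus_eq r_distr l_distr r_minus l_minus m_assoc)
    ultimately show ?thesis by simp
  qed
  then show ?thesis using jac_char Pc wc by auto
qed

lemma conj_pow: assumes P: "P \<in> Units R" and w: "w \<in> carrier R"
  shows "(inv P \<otimes> w \<otimes> P) [^] (n::nat) = inv P \<otimes> w [^] n \<otimes> P"
proof (induction n)
  case 0 then show ?case using P by simp
next
  case (Suc n)
  then show ?case using P w by (simp add: m_assoc Units_closed)
qed

lemma conj_nil: assumes P: "P \<in> Units R" and w: "w \<in> nilpotents R"
  shows "inv P \<otimes> w \<otimes> P \<in> nilpotents R"
proof -
  obtain n where "w \<in> carrier R" "w [^] (n::nat) = \<zero>" using w by (auto simp: nilpotents_def)
  then have "(inv P \<otimes> w \<otimes> P) [^] n = \<zero>" using conj_pow[OF P] P by (simp add: Units_closed)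
  then show ?thesis using P \<open>w \<in> carrier R\<close> by (auto simp: nilpotents_def Units_closed)
qed

lemma conj_back: assumes P: "P \<in> Units R" and w: "w \<in> carrier R"
  shows "inv (inv P) \<otimes> (inv P \<otimes> w \<otimes> P) \<otimes> inv P = w"
  using P w by (simp add: m_assoc Units_closed)

lemma conj_jac_iff: "P \<in> Units R \<Longrightarrow> w \<in> carrier R \<Longrightarrow> inv P \<otimes> w \<otimes> P \<in> jacobson R \<longleftrightarrow> w \<in> jacobson R"
  by (metis conj_back conj_jac Units_inv_Units)
lemma conj_nil_iff: "P \<in> Units R \<Longrightarrow> w \<in> carrier R \<Longrightarrow> inv P \<otimes> w \<otimes> P \<in> nilpotents R \<longleftrightarrow> w \<in> nilpotents R"
  by (metis conj_back conj_nil Units_inv_Units)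
end
context m2
begin
interpretation T: ring T by (rule T_ring)

lemma T_neg: "a \<in> carrier R \<Longrightarrow> b \<in> carrier R \<Longrightarrow> c \<in> carrier R \<Longrightarrow> d \<in> carrier R \<Longrightarrow>
  \<ominus>\<^bsub>T\<^esub> (a,b,c,d) = (\<ominus>a,\<ominus>b,\<ominus>c,\<ominus>d)"
  by (rule T.minus_equality) (auto simp: Tsimps l_neg)

lemma T_minus: "a \<in> carrier R \<Longrightarrow> b \<in> carrier R \<Longrightarrow> c \<in> carrier R \<Longrightarrow> d \<in> carrier R \<Longrightarrow>
  a' \<in> carrier R \<Longrightarrow> b' \<in> carrier R \<Longrightarrow> c' \<in> carrier R \<Longrightarrow> d' \<in> carrier R \<Longrightarrow>
  (a,b,c,d) \<ominus>\<^bsub>T\<^esub> (a',b',c',d') = (a \<ominus> a', b \<ominus> b', c \<ominus> c', d \<ominus> d')"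
  by (simp add: T.minus_eq T_neg T_add minus_eq)

lemma T_unitI: "XX \<in> carrier T \<Longrightarrow> YY \<in> carrier T \<Longrightarrow> XX \<otimes>\<^bsub>T\<^esub> YY = \<one>\<^bsub>T\<^esub> \<Longrightarrow> YY \<otimes>\<^bsub>T\<^esub> XX = \<one>\<^bsub>T\<^esub> \<Longrightarrow> XX \<in> Units T"
  unfolding Units_def by auto

lemma diag_pow: "x \<in> carrier R \<Longrightarrow> y \<in> carrier R \<Longrightarrow> (x,\<zero>,\<zero>,y) [^]\<^bsub>T\<^esub> (n::nat) = (x [^] n, \<zero>, \<zero>, y [^] n)"
  by (induction n) (auto simp: Tsimps)

lemma diag_nil_iff: "x \<in> carrier R \<Longrightarrow> y \<in> carrier R \<Longrightarrow>
   (x,\<zero>,\<zero>,y) \<in> nilpotents T \<longleftrightarrow> x \<in> nilpotents R \<and> y \<in> nilpotents R"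
proof
  assume c: "x \<in> carrier R" "y \<in> carrier R"
  assume "(x,\<zero>,\<zero>,y) \<in> nilpotents T"
  then obtain n where "(x,\<zero>,\<zero>,y) [^]\<^bsub>T\<^esub> (n::nat) = \<zero>\<^bsub>T\<^esub>" by (auto simp: nilpotents_def)
  then have "x [^] n = \<zero>" "y [^] n = \<zero>" using c by (auto simp: diag_pow T_zero)
  then show "x \<in> nilpotents R \<and> y \<in> nilpotents R" using c by (auto simp: nilpotents_def)
next
  assume c: "x \<in> carrier R" "y \<in> carrier R"
  assume "x \<in> nilpotents R \<and> y \<in> nilpotents R"
  then obtain n m where n: "x [^] (n::nat) = \<zero>" and m: "y [^] (m::nat) = \<zero>" by (auto simp: nilpotents_def)
  have "x [^] (n + m) = \<zero>" using n c by (simp add: nat_pow_mult[symmetric])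
  moreover have "y [^] (n + m) = \<zero>" using m c by (simp add: nat_pow_mult[symmetric])
  ultimately have "(x,\<zero>,\<zero>,y) [^]\<^bsub>T\<^esub> (n + m) = \<zero>\<^bsub>T\<^esub>" using c by (simp add: diag_pow T_zero)
  then show "(x,\<zero>,\<zero>,y) \<in> nilpotents T" using c by (auto simp: nilpotents_def T_carrier)
qed

end

locale m2l = m2 R s + lring R for R (structure) and s
begin
interpretation T: ring T by (rule T_ring)

lemma schur:
  assumes a: "a \<in> Units R" and bcd: "b \<in> carrier R" "c \<in> carrier R" "d \<in> carrier R"
    and sig: "d \<ominus> sc (c \<otimes> inv a \<otimes> b) \<in> Units R"
  shows "(a,b,c,d) \<in> Units T"
proof -
  define \<sigma> where "\<sigma> = d \<ominus> sc (c \<otimes> inv a \<otimes> b)"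
  have ac: "a \<in> carrier R" "inv a \<in> carrier R" using a by auto
  have sc': "\<sigma> \<in> carrier R" "inv \<sigma> \<in> carrier R" "\<sigma> \<in> Units R" using sig by (auto simp: \<sigma>_def)
  define L where "L = (\<one>, \<zero>, c \<otimes> inv a, \<one>)"
  define D where "D = (a, \<zero>, \<zero>, \<sigma>)"
  define U where "U = (\<one>, inv a \<otimes> b, \<zero>, \<one>)"
  have LU: "L \<in> Units T"
    by (rule T_unitI[of _ "(\<one>, \<zero>, \<ominus> (c \<otimes> inv a), \<one>)"])
       (use ac bcd in \<open>auto simp: L_def Tsimps l_neg r_neg\<close>)
  have DU: "D \<in> Units T"
    by (rule T_unitI[of _ "(inv a, \<zero>, \<zero>, inv \<sigma>)"])
       (use ac bcd sc' a in \<open>auto simp: D_def Tsimps\<close>)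
  have UU: "U \<in> Units T"
    by (rule T_unitI[of _ "(\<one>, \<ominus> (inv a \<otimes> b), \<zero>, \<one>)"])
       (use ac bcd in \<open>auto simp: U_def Tsimps l_neg r_neg\<close>)
  have "L \<otimes>\<^bsub>T\<^esub> D \<otimes>\<^bsub>T\<^esub> U = (a,b,c,d)"
    using ac bcd sc' a by (simp add: L_def D_def U_def Tsimps m_assoc \<sigma>_def minus_eq a_ac r_neg1 r_neg2 r_neg)
  moreover have "L \<otimes>\<^bsub>T\<^esub> D \<otimes>\<^bsub>T\<^esub> U \<in> Units T" using LU DU UU by simp
  ultimately show ?thesis by simp
qed

end
context m2l
begin
interpretation T: ring T by (rule T_ring)

lemma one_plus_J_unit: "x \<in> carrier R \<Longrightarrow> x \<ominus> \<one> \<in> JR \<Longrightarrow> x \<in> Units R"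
proof -
  assume x: "x \<in> carrier R" "x \<ominus> \<one> \<in> JR"
  have "\<one> \<oplus> (x \<ominus> \<one>) \<in> Units R" using unit_add_J[OF Units_one_closed x(2)] .
  moreover have "\<one> \<oplus> (x \<ominus> \<one>) = x" using x(1) by (simp add: minus_eq minus_add minus_minus a_ac r_neg r_neg1 r_neg2 r_minus l_minus r_distr l_distr)
  ultimately show ?thesis by simp
qed

lemma sc_J: "x \<in> JR \<Longrightarrow> sc x \<in> JR" unfolding sc_def by (rule jac_mult) auto

lemma near_id_unit:
  assumes c: "a \<in> carrier R" "b \<in> carrier R" "c \<in> carrier R" "d \<in> carrier R"
    and J: "a \<ominus> \<one> \<in> JR" "b \<in> JR" "c \<in> JR" "d \<ominus> \<one> \<in> JR"
  shows "(a,b,c,d) \<in> Units T"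
proof (rule schur)
  show au: "a \<in> Units R" using one_plus_J_unit c J by auto
  show "b \<in> carrier R" "c \<in> carrier R" "d \<in> carrier R" using c by auto
  have j: "sc (c \<otimes> inv a \<otimes> b) \<in> JR" using J au c by (intro sc_J J_right) auto
  have "(d \<ominus> sc (c \<otimes> inv a \<otimes> b)) \<ominus> \<one> = (d \<ominus> \<one>) \<oplus> \<ominus> sc (c \<otimes> inv a \<otimes> b)"
    using c au by (simp add: minus_eq a_ac)
  also have "\<dots> \<in> JR" using J(4) j jac_add jac_neg by blast
  finally show "d \<ominus> sc (c \<otimes> inv a \<otimes> b) \<in> Units R" using c au by (intro one_plus_J_unit) auto
qed

lemma E22_nonunit: "(\<zero>,\<zero>,\<zero>,\<one>) \<notin> Units T"
proof
  assume "(\<zero>,\<zero>,\<zero>,\<one>) \<in> Units T"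
  then obtain z where z: "z \<in> carrier T" "(\<zero>,\<zero>,\<zero>,\<one>) \<otimes>\<^bsub>T\<^esub> z = \<one>\<^bsub>T\<^esub>" unfolding Units_def by auto
  obtain z1 z2 z3 z4 where "z = (z1,z2,z3,z4)" by (cases z) auto
  then show False using z one_ne_zero by (auto simp: Tsimps)
qed

lemma E11_nonunit: "(\<one>,\<zero>,\<zero>,\<zero>) \<notin> Units T"
proof
  assume "(\<one>,\<zero>,\<zero>,\<zero>) \<in> Units T"
  then obtain z where z: "z \<in> carrier T" "(\<one>,\<zero>,\<zero>,\<zero>) \<otimes>\<^bsub>T\<^esub> z = \<one>\<^bsub>T\<^esub>" unfolding Units_def by auto
  obtain z1 z2 z3 z4 where "z = (z1,z2,z3,z4)" by (cases z) auto
  then show False using z one_ne_zero by (auto simp: Tsimps)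
qed

lemma diag_jac_iff: assumes c: "x \<in> carrier R" "y \<in> carrier R"
  shows "(x,\<zero>,\<zero>,y) \<in> jacobson T \<longleftrightarrow> x \<in> JR \<and> y \<in> JR"
proof
  assume D: "(x,\<zero>,\<zero>,y) \<in> jacobson T"
  then have H: "\<And>YY. YY \<in> carrier T \<Longrightarrow> \<one>\<^bsub>T\<^esub> \<ominus>\<^bsub>T\<^esub> YY \<otimes>\<^bsub>T\<^esub> (x,\<zero>,\<zero>,y) \<in> Units T"
    using T.jac_char by blast
  show "x \<in> JR \<and> y \<in> JR"
  proof (rule conjI; rule ccontr)
    assume "x \<notin> JR" then have xu: "x \<in> Units R" using notJ_unit c by auto
    have "\<one>\<^bsub>T\<^esub> \<ominus>\<^bsub>T\<^esub> (inv x,\<zero>,\<zero>,\<zero>) \<otimes>\<^bsub>T\<^esub> (x,\<zero>,\<zero>,y) = (\<zero>,\<zero>,\<zero>,\<one>)"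
      using xu c by (simp add: Tsimps T_minus minus_eq r_neg)
    then show False using H[of "(inv x,\<zero>,\<zero>,\<zero>)"] xu E22_nonunit by (auto simp: T_carrier)
  next
    assume "y \<notin> JR" then have yu: "y \<in> Units R" using notJ_unit c by auto
    have "\<one>\<^bsub>T\<^esub> \<ominus>\<^bsub>T\<^esub> (\<zero>,\<zero>,\<zero>,inv y) \<otimes>\<^bsub>T\<^esub> (x,\<zero>,\<zero>,y) = (\<one>,\<zero>,\<zero>,\<zero>)"
      using yu c by (simp add: Tsimps T_minus minus_eq r_neg)
    then show False using H[of "(\<zero>,\<zero>,\<zero>,inv y)"] yu E11_nonunit by (auto simp: T_carrier)
  qed
next
  assume J: "x \<in> JR \<and> y \<in> JR"
  have "\<one>\<^bsub>T\<^esub> \<ominus>\<^bsub>T\<^esub> YY \<otimes>\<^bsub>T\<^esub> (x,\<zero>,\<zero>,y) \<in> Units T" if YY: "YY \<in> carrier T" for YY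
  proof -
    obtain y1 y2 y3 y4 where Y: "YY = (y1,y2,y3,y4)" "y1 \<in> carrier R" "y2 \<in> carrier R" "y3 \<in> carrier R" "y4 \<in> carrier R"
      using YY by (cases YY) (auto simp: T_carrier)
    have eq: "\<one>\<^bsub>T\<^esub> \<ominus>\<^bsub>T\<^esub> YY \<otimes>\<^bsub>T\<^esub> (x,\<zero>,\<zero>,y) = (\<one> \<ominus> y1 \<otimes> x, \<ominus> (y2 \<otimes> y), \<ominus> (y3 \<otimes> x), \<one> \<ominus> y4 \<otimes> y)"
      using Y c by (simp add: Tsimps T_minus minus_eq)
    have j1: "(\<one> \<ominus> y1 \<otimes> x) \<ominus> \<one> = \<ominus> (y1 \<otimes> x)" using Y c by (simp add: minus_eq minus_add minus_minus a_ac r_neg r_neg1 r_neg2 r_minus l_minus r_distr l_distr)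
    have j4: "(\<one> \<ominus> y4 \<otimes> y) \<ominus> \<one> = \<ominus> (y4 \<otimes> y)" using Y c by (simp add: minus_eq minus_add minus_minus a_ac r_neg r_neg1 r_neg2 r_minus l_minus r_distr l_distr)
    show ?thesis unfolding eq
      by (rule near_id_unit) (use Y c J j1 j4 in \<open>auto intro: jac_neg jac_mult\<close>)
  qed
  then show "(x,\<zero>,\<zero>,y) \<in> jacobson T" using T.jac_char c by (auto simp: T_carrier)
qed

lemma comm_E11: assumes w: "w \<in> carrier T" and cm: "(\<one>,\<zero>,\<zero>,\<zero>) \<otimes>\<^bsub>T\<^esub> w = w \<otimes>\<^bsub>T\<^esub> (\<one>,\<zero>,\<zero>,\<zero>)"
  shows "\<exists>x y. w = (x,\<zero>,\<zero>,y) \<and> x \<in> carrier R \<and> y \<in> carrier R"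
proof -
  obtain a b c d where "w = (a,b,c,d)" "a \<in> carrier R" "b \<in> carrier R" "c \<in> carrier R" "d \<in> carrier R"
    using w by (cases w) (auto simp: T_carrier)
  then show ?thesis using cm by (auto simp: Tsimps)
qed

lemma comm_E22: assumes w: "w \<in> carrier T" and cm: "(\<zero>,\<zero>,\<zero>,\<one>) \<otimes>\<^bsub>T\<^esub> w = w \<otimes>\<^bsub>T\<^esub> (\<zero>,\<zero>,\<zero>,\<one>)"
  shows "\<exists>x y. w = (x,\<zero>,\<zero>,y) \<and> x \<in> carrier R \<and> y \<in> carrier R"
proof -
  obtain a b c d where "w = (a,b,c,d)" "a \<in> carrier R" "b \<in> carrier R" "c \<in> carrier R" "d \<in> carrier R"
    using w by (cases w) (auto simp: T_carrier)
  then show ?thesis using cm by (auto simp: Tsimps)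
qed

end
context ring
begin
lemma idem_compl: "e \<in> carrier R \<Longrightarrow> e \<otimes> e = e \<Longrightarrow> (\<one> \<ominus> e) \<otimes> (\<one> \<ominus> e) = \<one> \<ominus> e"
proof -
  assume e: "e \<in> carrier R" "e \<otimes> e = e"
  have "(\<one> \<ominus> e) \<otimes> (\<one> \<ominus> e) = \<one> \<oplus> (\<ominus> e \<oplus> (\<ominus> e \<oplus> e \<otimes> e))"
    using e(1) by (simp add: minus_eq l_distr r_distr l_minus r_minus a_assoc minus_add minus_minus)
  also have "\<dots> = \<one> \<ominus> e" using e by (simp add: minus_eq l_neg)
  finally show ?thesis .
qed
end

context ring begin
lemma neg_eq_zero: "x \<in> carrier R \<Longrightarrow> \<ominus> x = \<zero> \<Longrightarrow> x = \<zero>"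
  by (metis minus_minus minus_zero)
lemma one_minus_eq_one: "x \<in> carrier R \<Longrightarrow> \<one> \<ominus> x = \<one> \<Longrightarrow> x = \<zero>"
proof -
  assume x: "x \<in> carrier R" "\<one> \<ominus> x = \<one>"
  then have "\<one> \<oplus> \<ominus> x = \<one>" by (simp add: minus_eq)
  then have "\<ominus> x = \<zero>" using x(1) add.l_cancel_one[of \<one> "\<ominus> x"] by simp
  then show ?thesis using x(1) neg_eq_zero by blast
qed
end

context m2l
begin
interpretation T: ring T by (rule T_ring)

lemma idem_conj:
  assumes ec: "e \<in> carrier T" and ee: "e \<otimes>\<^bsub>T\<^esub> e = e" and e0: "e \<noteq> \<zero>\<^bsub>T\<^esub>" and e1: "e \<noteq> \<one>\<^bsub>T\<^esub>"
  shows "\<exists>P\<in>Units T. e \<otimes>\<^bsub>T\<^esub> P = P \<otimes>\<^bsub>T\<^esub> (\<one>,\<zero>,\<zero>,\<zero>) \<or> e \<otimes>\<^bsub>T\<^esub> P = P \<otimes>\<^bsub>T\<^esub> (\<zero>,\<zero>,\<zero>,\<one>)"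
proof -
  obtain p q r u where eq: "e = (p,q,r,u)" and c: "p \<in> carrier R" "q \<in> carrier R" "r \<in> carrier R" "u \<in> carrier R"
    using ec by (cases e) (auto simp: T_carrier)
  have "(p,q,r,u) \<otimes>\<^bsub>T\<^esub> (p,q,r,u) = (p\<otimes>p \<oplus> sc (q\<otimes>r), p\<otimes>q \<oplus> q\<otimes>u, r\<otimes>p \<oplus> u\<otimes>r, sc (r\<otimes>q) \<oplus> u\<otimes>u)"
    by (rule T_mult) (use c in auto)
  then have E: "p\<otimes>p \<oplus> sc (q\<otimes>r) = p" "p\<otimes>q \<oplus> q\<otimes>u = q" "r\<otimes>p \<oplus> u\<otimes>r = r" "sc (r\<otimes>q) \<oplus> u\<otimes>u = u"
    using ee eq by auto
  show ?thesis
  proof (cases "p \<in> JR")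
    case False
    then have pu: "p \<in> Units R" using notJ_unit c by auto
    define P where "P = (p, \<ominus> q, r, \<one> \<ominus> u)"
    have PE: "e \<otimes>\<^bsub>T\<^esub> P = P \<otimes>\<^bsub>T\<^esub> (\<one>,\<zero>,\<zero>,\<zero>)"
    proof -
      have "e \<otimes>\<^bsub>T\<^esub> P = (p\<otimes>p \<oplus> sc (q\<otimes>r), p\<otimes>(\<ominus> q) \<oplus> q\<otimes>(\<one> \<ominus> u), r\<otimes>p \<oplus> u\<otimes>r, sc (r\<otimes>(\<ominus> q)) \<oplus> u\<otimes>(\<one> \<ominus> u))"
        unfolding eq P_def by (rule T_mult) (use c in auto)
      moreover have "p\<otimes>(\<ominus> q) \<oplus> q\<otimes>(\<one> \<ominus> u) = q \<ominus> (p\<otimes>q \<oplus> q\<otimes>u)" using c by (simp add: minus_eq minus_add minus_minus a_ac r_neg r_neg1 r_neg2 r_minus l_minus r_distr l_distr)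
      moreover have "sc (r\<otimes>(\<ominus> q)) \<oplus> u\<otimes>(\<one> \<ominus> u) = u \<ominus> (sc (r\<otimes>q) \<oplus> u\<otimes>u)"
        using c by (simp add: r_minus minus_eq r_distr a_ac minus_add)
      ultimately have "e \<otimes>\<^bsub>T\<^esub> P = (p, \<zero>, r, \<zero>)" using E c by (simp add: minus_eq r_neg)
      moreover have "P \<otimes>\<^bsub>T\<^esub> (\<one>,\<zero>,\<zero>,\<zero>) = (p, \<zero>, r, \<zero>)" using c by (simp add: P_def Tsimps)
      ultimately show ?thesis by simp
    qed
    define \<sigma> where "\<sigma> = (\<one> \<ominus> u) \<ominus> sc (r \<otimes> inv p \<otimes> (\<ominus> q))"
    have \<sigma>c: "\<sigma> \<in> carrier R" using c pu by (simp add: \<sigma>_def)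
    have "P \<in> Units T"
    proof (cases "\<sigma> \<in> Units R")
      case True
      then show ?thesis unfolding P_def using pu c by (intro schur) (auto simp: \<sigma>_def)
    next
      case False
      then have "\<sigma> \<in> JR" using notJ_unit \<sigma>c by auto
      then have "\<one> \<ominus> \<sigma> \<in> Units R" by (rule jac_one_minus_unit)
      moreover have "\<one> \<ominus> \<sigma> = u \<ominus> sc (r \<otimes> inv p \<otimes> q)"
        using c pu by (simp add: \<sigma>_def r_minus minus_eq minus_add a_ac r_neg1 r_neg2)
      ultimately have "e \<in> Units T" unfolding eq using pu c by (intro schur) auto
      then have "e = \<one>\<^bsub>T\<^esub>" using T.idem_unit_one ee by blast
      then show ?thesis using e1 by simp
    qed
    then show ?thesis using PE by blast
  next
    case True
    then have pu: "\<one> \<ominus> p \<in> Units R" by (rule jac_one_minus_unit)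
    define P where "P = (\<one> \<ominus> p, q, \<ominus> r, u)"
    have PE: "e \<otimes>\<^bsub>T\<^esub> P = P \<otimes>\<^bsub>T\<^esub> (\<zero>,\<zero>,\<zero>,\<one>)"
    proof -
      have "e \<otimes>\<^bsub>T\<^esub> P = (p\<otimes>(\<one> \<ominus> p) \<oplus> sc (q\<otimes>(\<ominus> r)), p\<otimes>q \<oplus> q\<otimes>u, r\<otimes>(\<one> \<ominus> p) \<oplus> u\<otimes>(\<ominus> r), sc (r\<otimes>q) \<oplus> u\<otimes>u)"
        unfolding eq P_def by (rule T_mult) (use c in auto)
      moreover have "p\<otimes>(\<one> \<ominus> p) \<oplus> sc (q\<otimes>(\<ominus> r)) = p \<ominus> (p\<otimes>p \<oplus> sc (q\<otimes>r))"
        using c by (simp add: r_minus minus_eq r_distr a_ac minus_add)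
      moreover have "r\<otimes>(\<one> \<ominus> p) \<oplus> u\<otimes>(\<ominus> r) = r \<ominus> (r\<otimes>p \<oplus> u\<otimes>r)" using c by (simp add: minus_eq minus_add minus_minus a_ac r_neg r_neg1 r_neg2 r_minus l_minus r_distr l_distr)
      ultimately have "e \<otimes>\<^bsub>T\<^esub> P = (\<zero>, q, \<zero>, u)" using E c by (simp add: minus_eq r_neg)
      moreover have "P \<otimes>\<^bsub>T\<^esub> (\<zero>,\<zero>,\<zero>,\<one>) = (\<zero>, q, \<zero>, u)" using c by (simp add: P_def Tsimps)
      ultimately show ?thesis by simp
    qed
    define \<sigma> where "\<sigma> = u \<ominus> sc ((\<ominus> r) \<otimes> inv (\<one> \<ominus> p) \<otimes> q)"
    have \<sigma>c: "\<sigma> \<in> carrier R" using c pu by (simp add: \<sigma>_def)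
    have "P \<in> Units T"
    proof (cases "\<sigma> \<in> Units R")
      case True
      then show ?thesis unfolding P_def using pu c by (intro schur) (auto simp: \<sigma>_def)
    next
      case False
      then have "\<sigma> \<in> JR" using notJ_unit \<sigma>c by auto
      then have "\<one> \<ominus> \<sigma> \<in> Units R" by (rule jac_one_minus_unit)
      moreover have "\<one> \<ominus> \<sigma> = (\<one> \<ominus> u) \<ominus> sc ((\<ominus> r) \<otimes> inv (\<one> \<ominus> p) \<otimes> (\<ominus> q))"
        using c pu by (simp add: \<sigma>_def r_minus l_minus minus_eq minus_add a_ac r_neg1 r_neg2)
      ultimately have fu: "(\<one> \<ominus> p, \<ominus> q, \<ominus> r, \<one> \<ominus> u) \<in> Units T" using pu c by (intro schur) auto
      have feq: "\<one>\<^bsub>T\<^esub> \<ominus>\<^bsub>T\<^esub> e = (\<one> \<ominus> p, \<ominus> q, \<ominus> r, \<one> \<ominus> u)"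
        using c by (simp add: eq T_one T_minus minus_eq)
      have "\<one>\<^bsub>T\<^esub> \<ominus>\<^bsub>T\<^esub> e = \<one>\<^bsub>T\<^esub>"
        using T.idem_unit_one[of "\<one>\<^bsub>T\<^esub> \<ominus>\<^bsub>T\<^esub> e"] T.idem_compl[OF ec ee] fu feq by simp
      then have "(\<one> \<ominus> p, \<ominus> q, \<ominus> r, \<one> \<ominus> u) = (\<one>, \<zero>, \<zero>, \<one>)" using feq by (simp only: T_one)
      then have h: "\<one> \<ominus> p = \<one>" "\<ominus> q = \<zero>" "\<ominus> r = \<zero>" "\<one> \<ominus> u = \<one>" by auto
      have "p = \<zero>" by (rule one_minus_eq_one[OF c(1) h(1)])
      moreover have "q = \<zero>" by (rule neg_eq_zero[OF c(2) h(2)])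
      moreover have "r = \<zero>" by (rule neg_eq_zero[OF c(3) h(3)])
      moreover have "u = \<zero>" by (rule one_minus_eq_one[OF c(4) h(4)])
      ultimately have "p = \<zero> \<and> q = \<zero> \<and> r = \<zero> \<and> u = \<zero>" by simp
      then have "e = \<zero>\<^bsub>T\<^esub>" using eq by (simp add: T_zero)
      then show ?thesis using e0 by simp
    qed
    then show ?thesis using PE by blast
  qed
qed
end
context ring
begin
lemma neg_pow: "x \<in> carrier R \<Longrightarrow> (\<ominus> x) [^] (k::nat) = (\<ominus> \<one>) [^] k \<otimes> x [^] k"
proof (induction k)
  case 0 then show ?case by simp
next
  case (Suc k)
  then show ?case by (simp add: m_assoc l_minus r_minus nat_pow_Suc2 del: nat_pow_Suc)
qed

lemma neg_nil: "w \<in> nilpotents R \<Longrightarrow> \<ominus> w \<in> nilpotents R"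
proof -
  assume "w \<in> nilpotents R"
  then obtain k where w: "w \<in> carrier R" "w [^] (k::nat) = \<zero>" by (auto simp: nilpotents_def)
  then have "(\<ominus> w) [^] k = \<zero>" using neg_pow[OF w(1), of k] by simp
  then show ?thesis using w by (auto simp: nilpotents_def)
qed

lemma quasi_unit1: "w \<in> nilpotents R \<or> w \<in> jacobson R \<Longrightarrow> \<one> \<ominus> w \<in> Units R"
proof (erule disjE)
  assume "w \<in> nilpotents R"
  then obtain k where "w \<in> carrier R" "w [^] (k::nat) = \<zero>" unfolding nilpotents_def by blast
  then show ?thesis by (rule nilp_one_minus_unit)
next
  assume "w \<in> jacobson R" then show ?thesis by (rule jac_one_minus_unit)
qed

lemma quasi_units: assumes "w \<in> nilpotents R \<or> w \<in> jacobson R"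
  shows "\<one> \<ominus> w \<in> Units R" "\<one> \<ominus> \<ominus> w \<in> Units R"
proof -
  show "\<one> \<ominus> w \<in> Units R" using assms by (rule quasi_unit1)
  have "\<ominus> w \<in> nilpotents R \<or> \<ominus> w \<in> jacobson R"
  proof (rule disjE[OF assms])
    assume "w \<in> nilpotents R" then show ?thesis using neg_nil by blast
  next
    assume "w \<in> jacobson R" then show ?thesis using jac_neg by blast
  qed
  then show "\<one> \<ominus> \<ominus> w \<in> Units R" by (rule quasi_unit1)
qed

lemma comm_minus: "A \<in> carrier R \<Longrightarrow> e \<in> carrier R \<Longrightarrow> A \<otimes> e = e \<otimes> A \<Longrightarrow>
   (A \<ominus> e) \<otimes> e = e \<otimes> (A \<ominus> e)"
  by (simp add: minus_eq l_distr r_distr l_minus r_minus)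

lemma conj_comm:
  assumes P: "P \<in> Units R" and c: "w \<in> carrier R" "e \<in> carrier R" "E \<in> carrier R"
    and we: "w \<otimes> e = e \<otimes> w" and eP: "e \<otimes> P = P \<otimes> E"
  shows "(inv P \<otimes> w \<otimes> P) \<otimes> E = E \<otimes> (inv P \<otimes> w \<otimes> P)"
proof -
  have Pc: "P \<in> carrier R" "inv P \<in> carrier R" using P by auto
  have "inv P \<otimes> (e \<otimes> P) = E" using eP P c by simp
  then have E: "E = inv P \<otimes> e \<otimes> P" using Pc c by (simp add: m_assoc)
  have "(inv P \<otimes> w \<otimes> P) \<otimes> E = inv P \<otimes> ((w \<otimes> e) \<otimes> P)"
    unfolding E using Pc c P by (simp add: m_assoc)
  also have "\<dots> = inv P \<otimes> ((e \<otimes> w) \<otimes> P)" by (simp add: we)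
  also have "\<dots> = E \<otimes> (inv P \<otimes> w \<otimes> P)"
    unfolding E using Pc c P by (simp add: m_assoc)
  finally show ?thesis .
qed
end

context m2l
begin
interpretation T: ring T by (rule T_ring)

lemma key_reduce:
  assumes Ac: "A \<in> carrier T" and nA: "A \<notin> Units T" and nA1: "\<one>\<^bsub>T\<^esub> \<ominus>\<^bsub>T\<^esub> A \<notin> Units T"
    and ei: "idempotent_elem T e" and cm: "A \<otimes>\<^bsub>T\<^esub> e = e \<otimes>\<^bsub>T\<^esub> A"
    and Q: "A \<ominus>\<^bsub>T\<^esub> e \<in> nilpotents T \<or> A \<ominus>\<^bsub>T\<^esub> e \<in> jacobson T"
  shows "\<exists>P\<in>Units T. \<exists>x y. x \<in> carrier R \<and> y \<in> carrier R \<and>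
           inv\<^bsub>T\<^esub> P \<otimes>\<^bsub>T\<^esub> (A \<ominus>\<^bsub>T\<^esub> e) \<otimes>\<^bsub>T\<^esub> P = (x,\<zero>,\<zero>,y)"
proof -
  have ec: "e \<in> carrier T" and ee: "e \<otimes>\<^bsub>T\<^esub> e = e" using ei by (auto simp: idempotent_elem_def)
  define w where "w = A \<ominus>\<^bsub>T\<^esub> e"
  have wc: "w \<in> carrier T" using Ac ec by (simp add: w_def)
  have qu: "\<one>\<^bsub>T\<^esub> \<ominus>\<^bsub>T\<^esub> w \<in> Units T" "\<one>\<^bsub>T\<^esub> \<ominus>\<^bsub>T\<^esub> \<ominus>\<^bsub>T\<^esub> w \<in> Units T"
    using T.quasi_units[OF Q[folded w_def]] by auto
  have e0: "e \<noteq> \<zero>\<^bsub>T\<^esub>"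
  proof
    assume "e = \<zero>\<^bsub>T\<^esub>"
    then have "w = A" using Ac by (simp add: w_def T.minus_eq)
    then show False using qu(1) nA1 by simp
  qed
  have e1: "e \<noteq> \<one>\<^bsub>T\<^esub>"
  proof
    assume "e = \<one>\<^bsub>T\<^esub>"
    then have "\<one>\<^bsub>T\<^esub> \<ominus>\<^bsub>T\<^esub> \<ominus>\<^bsub>T\<^esub> w = \<one>\<^bsub>T\<^esub> \<oplus>\<^bsub>T\<^esub> (A \<oplus>\<^bsub>T\<^esub> \<ominus>\<^bsub>T\<^esub> \<one>\<^bsub>T\<^esub>)"
      using Ac by (simp add: w_def T.minus_eq)
    also have "\<dots> = A" using Ac by (rule T.one_plus_minus)
    finally show False using qu(2) nA by simp
  qed
  obtain P where PU: "P \<in> Units T" and PE: "e \<otimes>\<^bsub>T\<^esub> P = P \<otimes>\<^bsub>T\<^esub> (\<one>,\<zero>,\<zero>,\<zero>) \<or> e \<otimes>\<^bsub>T\<^esub> P = P \<otimes>\<^bsub>T\<^esub> (\<zero>,\<zero>,\<zero>,\<one>)"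
    using idem_conj[OF ec ee e0 e1] by blast
  have we: "w \<otimes>\<^bsub>T\<^esub> e = e \<otimes>\<^bsub>T\<^esub> w" unfolding w_def using Ac ec cm by (rule T.comm_minus)
  have w'c: "inv\<^bsub>T\<^esub> P \<otimes>\<^bsub>T\<^esub> w \<otimes>\<^bsub>T\<^esub> P \<in> carrier T" using PU wc by (simp add: T.Units_closed)
  have "\<exists>x y. inv\<^bsub>T\<^esub> P \<otimes>\<^bsub>T\<^esub> w \<otimes>\<^bsub>T\<^esub> P = (x,\<zero>,\<zero>,y) \<and> x \<in> carrier R \<and> y \<in> carrier R"
    using PE
  proof
    assume h: "e \<otimes>\<^bsub>T\<^esub> P = P \<otimes>\<^bsub>T\<^esub> (\<one>,\<zero>,\<zero>,\<zero>)"
    have "(\<one>,\<zero>,\<zero>,\<zero>) \<in> carrier T" by (simp add: T_carrier)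
    then have "(inv\<^bsub>T\<^esub> P \<otimes>\<^bsub>T\<^esub> w \<otimes>\<^bsub>T\<^esub> P) \<otimes>\<^bsub>T\<^esub> (\<one>,\<zero>,\<zero>,\<zero>) = (\<one>,\<zero>,\<zero>,\<zero>) \<otimes>\<^bsub>T\<^esub> (inv\<^bsub>T\<^esub> P \<otimes>\<^bsub>T\<^esub> w \<otimes>\<^bsub>T\<^esub> P)"
      using T.conj_comm[OF PU wc ec _ we h] by blast
    then show ?thesis using comm_E11[OF w'c] by simp
  next
    assume h: "e \<otimes>\<^bsub>T\<^esub> P = P \<otimes>\<^bsub>T\<^esub> (\<zero>,\<zero>,\<zero>,\<one>)"
    have "(\<zero>,\<zero>,\<zero>,\<one>) \<in> carrier T" by (simp add: T_carrier)
    then have "(inv\<^bsub>T\<^esub> P \<otimes>\<^bsub>T\<^esub> w \<otimes>\<^bsub>T\<^esub> P) \<otimes>\<^bsub>T\<^esub> (\<zero>,\<zero>,\<zero>,\<one>) = (\<zero>,\<zero>,\<zero>,\<one>) \<otimes>\<^bsub>T\<^esub> (inv\<^bsub>T\<^esub> P \<otimes>\<^bsub>T\<^esub> w \<otimes>\<^bsub>T\<^esub> P)"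
      using T.conj_comm[OF PU wc ec _ we h] by blast
    then show ?thesis using comm_E22[OF w'c] by simp
  qed
  then show ?thesis using PU unfolding w_def by blast
qed

lemma key1:
  assumes Ac: "A \<in> carrier T" and nA: "A \<notin> Units T" and nA1: "\<one>\<^bsub>T\<^esub> \<ominus>\<^bsub>T\<^esub> A \<notin> Units T"
    and ei: "idempotent_elem T e" and cm: "A \<otimes>\<^bsub>T\<^esub> e = e \<otimes>\<^bsub>T\<^esub> A"
    and N: "A \<ominus>\<^bsub>T\<^esub> e \<in> nilpotents T"
  shows "A \<ominus>\<^bsub>T\<^esub> e \<in> jacobson T"
proof -
  have wc: "A \<ominus>\<^bsub>T\<^esub> e \<in> carrier T" using N by (simp add: nilpotents_def)
  obtain P x y where PU: "P \<in> Units T" and xy: "x \<in> carrier R" "y \<in> carrier R"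
    and D: "inv\<^bsub>T\<^esub> P \<otimes>\<^bsub>T\<^esub> (A \<ominus>\<^bsub>T\<^esub> e) \<otimes>\<^bsub>T\<^esub> P = (x,\<zero>,\<zero>,y)"
    using key_reduce[OF Ac nA nA1 ei cm] N by blast
  have "(x,\<zero>,\<zero>,y) \<in> nilpotents T" using T.conj_nil[OF PU N] D by simp
  then have "x \<in> nilpotents R" "y \<in> nilpotents R" using diag_nil_iff xy by auto
  then have "x \<in> JR" "y \<in> JR" using nilp_J' by auto
  then have "(x,\<zero>,\<zero>,y) \<in> jacobson T" using diag_jac_iff xy by auto
  then show ?thesis using T.conj_jac_iff[OF PU wc] D by simp
qed

lemma key2:
  assumes Ac: "A \<in> carrier T" and nA: "A \<notin> Units T" and nA1: "\<one>\<^bsub>T\<^esub> \<ominus>\<^bsub>T\<^esub> A \<notin> Units T"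
    and ei: "idempotent_elem T e" and cm: "A \<otimes>\<^bsub>T\<^esub> e = e \<otimes>\<^bsub>T\<^esub> A"
    and N: "A \<ominus>\<^bsub>T\<^esub> e \<in> jacobson T" and nilJ: "nil_jacobson R"
  shows "A \<ominus>\<^bsub>T\<^esub> e \<in> nilpotents T"
proof -
  have wc: "A \<ominus>\<^bsub>T\<^esub> e \<in> carrier T" using N T.jac_carrier by blast
  obtain P x y where PU: "P \<in> Units T" and xy: "x \<in> carrier R" "y \<in> carrier R"
    and D: "inv\<^bsub>T\<^esub> P \<otimes>\<^bsub>T\<^esub> (A \<ominus>\<^bsub>T\<^esub> e) \<otimes>\<^bsub>T\<^esub> P = (x,\<zero>,\<zero>,y)"
    using key_reduce[OF Ac nA nA1 ei cm] N by blast
  have "(x,\<zero>,\<zero>,y) \<in> jacobson T" using T.conj_jac[OF PU N] D by simp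
  then have "x \<in> JR" "y \<in> JR" using diag_jac_iff xy by auto
  then have "x \<in> nilpotents R" "y \<in> nilpotents R" using nilJ by (auto simp: nil_jacobson_def)
  then have "(x,\<zero>,\<zero>,y) \<in> nilpotents T" using diag_nil_iff xy by auto
  then show ?thesis using T.conj_nil_iff[OF PU wc] D by simp
qed

lemma nil_from1:
  assumes H: "\<forall>A\<in>carrier T. A \<notin> Units T \<and> \<one>\<^bsub>T\<^esub> \<ominus>\<^bsub>T\<^esub> A \<notin> Units T \<longrightarrow> strongly_nil_clean T A"
  shows "nil_jacobson R"
  unfolding nil_jacobson_def
proof
  fix j assume jJ: "j \<in> JR"
  have jc: "j \<in> carrier R" using jJ J_closed by auto
  define A where "A = (j, \<zero>, \<zero>, \<one>)"
  have Ac: "A \<in> carrier T" using jc by (simp add: A_def T_carrier)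
  have nA: "A \<notin> Units T"
  proof
    assume "A \<in> Units T"
    then obtain B where B: "B \<in> carrier T" "A \<otimes>\<^bsub>T\<^esub> B = \<one>\<^bsub>T\<^esub>" unfolding Units_def by auto
    obtain b1 b2 b3 b4 where Bq: "B = (b1,b2,b3,b4)" "b1 \<in> carrier R" "b2 \<in> carrier R" "b3 \<in> carrier R" "b4 \<in> carrier R"
      using B(1) by (cases B) (auto simp: T_carrier)
    then have "j \<otimes> b1 = \<one>" using B(2) jc by (simp add: A_def Tsimps)
    moreover have "j \<otimes> b1 \<in> JR" using jJ Bq by (intro J_right) auto
    ultimately show False using one_notin_J by simp
  qed
  have A1: "\<one>\<^bsub>T\<^esub> \<ominus>\<^bsub>T\<^esub> A = (\<one> \<ominus> j, \<zero>, \<zero>, \<zero>)"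
    using jc by (simp add: A_def T_one T_minus minus_eq r_neg)
  have nA1: "\<one>\<^bsub>T\<^esub> \<ominus>\<^bsub>T\<^esub> A \<notin> Units T"
  proof
    assume "\<one>\<^bsub>T\<^esub> \<ominus>\<^bsub>T\<^esub> A \<in> Units T"
    then obtain B where B: "B \<in> carrier T" "(\<one> \<ominus> j, \<zero>, \<zero>, \<zero>) \<otimes>\<^bsub>T\<^esub> B = \<one>\<^bsub>T\<^esub>" unfolding Units_def A1 by auto
    obtain b1 b2 b3 b4 where Bq: "B = (b1,b2,b3,b4)" "b1 \<in> carrier R" "b2 \<in> carrier R" "b3 \<in> carrier R" "b4 \<in> carrier R"
      using B(1) by (cases B) (auto simp: T_carrier)
    then show False using B(2) jc one_ne_zero by (simp add: Tsimps)
  qed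
  obtain e where ei: "idempotent_elem T e" and cm: "A \<otimes>\<^bsub>T\<^esub> e = e \<otimes>\<^bsub>T\<^esub> A" and N: "A \<ominus>\<^bsub>T\<^esub> e \<in> nilpotents T"
  proof -
    have "strongly_nil_clean T A" using H Ac nA nA1 by blast
    then show ?thesis unfolding strongly_nil_clean_def using that by blast
  qed
  obtain p q r u where eq: "e = (p,q,r,u)" and c: "p \<in> carrier R" "q \<in> carrier R" "r \<in> carrier R" "u \<in> carrier R"
    using ei by (cases e) (auto simp: T_carrier idempotent_elem_def)
  have "A \<otimes>\<^bsub>T\<^esub> e = (j \<otimes> p, j \<otimes> q, r, u)" using jc c by (simp add: A_def eq Tsimps)
  moreover have "e \<otimes>\<^bsub>T\<^esub> A = (p \<otimes> j, q, r \<otimes> j, u)" using jc c by (simp add: A_def eq Tsimps)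
  ultimately have jq: "j \<otimes> q = q" and rj: "r = r \<otimes> j" using cm by auto
  have ju: "\<one> \<ominus> j \<in> Units R" using jJ by (rule jac_one_minus_unit)
  have "(\<one> \<ominus> j) \<otimes> q = q \<ominus> j \<otimes> q" using jc c by (simp add: minus_eq l_distr l_minus)
  then have "(\<one> \<ominus> j) \<otimes> q = \<zero>" using jq c by (simp add: minus_eq r_neg)
  then have q0: "q = \<zero>"
    using inv_cancel1[OF ju c(2)] ju by simp
  have "r \<otimes> (\<one> \<ominus> j) = r \<ominus> r \<otimes> j" using jc c by (simp add: minus_eq r_distr r_minus)
  then have "r \<otimes> (\<one> \<ominus> j) = \<zero>" using rj[symmetric] c by (simp add: minus_eq r_neg)
  moreover have "r = r \<otimes> (\<one> \<ominus> j) \<otimes> inv (\<one> \<ominus> j)" using ju c(3) by (simp add: m_assoc Units_closed)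
  ultimately have r0: "r = \<zero>" using ju by simp
  have "e \<otimes>\<^bsub>T\<^esub> e = e" using ei by (simp add: idempotent_elem_def)
  then have pp: "p \<otimes> p = p" using c q0 r0 by (simp add: eq Tsimps)
  have "A \<ominus>\<^bsub>T\<^esub> e = (j \<ominus> p, \<zero>, \<zero>, \<one> \<ominus> u)" using jc c q0 r0 by (simp add: A_def eq T_minus minus_eq)
  then have "(j \<ominus> p) \<in> nilpotents R" using N diag_nil_iff[of "j \<ominus> p" "\<one> \<ominus> u"] jc c by simp
  moreover have "p = \<zero> \<or> p = \<one>" using idem01 c(1) pp by blast
  moreover have "p \<noteq> \<one>"
  proof
    assume "p = \<one>"
    then have "j \<ominus> \<one> \<in> JR" using \<open>(j \<ominus> p) \<in> nilpotents R\<close> nilp_J' by simp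
    then have "j \<oplus> \<ominus> (j \<ominus> \<one>) \<in> JR" using jJ jac_add jac_neg by blast
    moreover have "j \<oplus> \<ominus> (j \<ominus> \<one>) = \<one>"
    proof -
      have "j \<oplus> \<ominus> (j \<ominus> \<one>) = j \<oplus> (\<one> \<oplus> \<ominus> j)" using jc by (simp add: minus_eq minus_add a_comm)
      also have "\<dots> = \<one> \<oplus> (j \<oplus> \<ominus> j)" using a_lcomm[OF jc one_closed a_inv_closed[OF jc]] .
      also have "\<dots> = \<one>" using jc by (simp add: r_neg)
      finally show ?thesis .
    qed
    ultimately show False using one_notin_J by simp
  qed
  ultimately have "j \<ominus> \<zero> \<in> nilpotents R" by auto
  then show "j \<in> nilpotents R" using jc by (simp add: minus_eq)
qed

end

theorem proposition2p14:
  fixes R :: "('a, 'b) ring_scheme" and s :: 'a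
  assumes "ring R" and "local_ring R" and "central_elem R s"
  shows "(\<forall>A\<in>carrier (M2s R s).
            A \<notin> Units (M2s R s) \<and> \<one>\<^bsub>M2s R s\<^esub> \<ominus>\<^bsub>M2s R s\<^esub> A \<notin> Units (M2s R s)
            \<longrightarrow> strongly_nil_clean (M2s R s) A)
     \<longleftrightarrow> ((\<forall>A\<in>carrier (M2s R s).
            A \<notin> Units (M2s R s) \<and> \<one>\<^bsub>M2s R s\<^esub> \<ominus>\<^bsub>M2s R s\<^esub> A \<notin> Units (M2s R s)
            \<longrightarrow> strongly_J_clean (M2s R s) A)
          \<and> nil_jacobson R)"
proof -
  interpret M: m2l R s
    using assms by (simp add: m2l_def m2_def m2_axioms_def lring_def lring_axioms_def)
  show ?thesis
  proof
    assume H1: "\<forall>A\<in>carrier (M2s R s).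
            A \<notin> Units (M2s R s) \<and> \<one>\<^bsub>M2s R s\<^esub> \<ominus>\<^bsub>M2s R s\<^esub> A \<notin> Units (M2s R s)
            \<longrightarrow> strongly_nil_clean (M2s R s) A"
    have "\<forall>A\<in>carrier (M2s R s).
            A \<notin> Units (M2s R s) \<and> \<one>\<^bsub>M2s R s\<^esub> \<ominus>\<^bsub>M2s R s\<^esub> A \<notin> Units (M2s R s)
            \<longrightarrow> strongly_J_clean (M2s R s) A"
    proof (intro ballI impI)
      fix A assume Ac: "A \<in> carrier (M2s R s)"
        and n: "A \<notin> Units (M2s R s) \<and> \<one>\<^bsub>M2s R s\<^esub> \<ominus>\<^bsub>M2s R s\<^esub> A \<notin> Units (M2s R s)"
      have "strongly_nil_clean (M2s R s) A" using H1 Ac n by blast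
      then obtain e where e: "idempotent_elem (M2s R s) e" "A \<otimes>\<^bsub>M2s R s\<^esub> e = e \<otimes>\<^bsub>M2s R s\<^esub> A"
          "A \<ominus>\<^bsub>M2s R s\<^esub> e \<in> nilpotents (M2s R s)"
        unfolding strongly_nil_clean_def by blast
      have "A \<ominus>\<^bsub>M2s R s\<^esub> e \<in> jacobson (M2s R s)"
        using M.key1[OF Ac conjunct1[OF n] conjunct2[OF n] e(1) e(2) e(3)] .
      then show "strongly_J_clean (M2s R s) A"
        unfolding strongly_J_clean_def using e(1,2) by blast
    qed
    moreover have "nil_jacobson R" using M.nil_from1[OF H1] .
    ultimately show "(\<forall>A\<in>carrier (M2s R s).
            A \<notin> Units (M2s R s) \<and> \<one>\<^bsub>M2s R s\<^esub> \<ominus>\<^bsub>M2s R s\<^esub> A \<notin> Units (M2s R s)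
            \<longrightarrow> strongly_J_clean (M2s R s) A) \<and> nil_jacobson R" by blast
  next
    assume H2: "(\<forall>A\<in>carrier (M2s R s).
            A \<notin> Units (M2s R s) \<and> \<one>\<^bsub>M2s R s\<^esub> \<ominus>\<^bsub>M2s R s\<^esub> A \<notin> Units (M2s R s)
            \<longrightarrow> strongly_J_clean (M2s R s) A) \<and> nil_jacobson R"
    show "\<forall>A\<in>carrier (M2s R s).
            A \<notin> Units (M2s R s) \<and> \<one>\<^bsub>M2s R s\<^esub> \<ominus>\<^bsub>M2s R s\<^esub> A \<notin> Units (M2s R s)
            \<longrightarrow> strongly_nil_clean (M2s R s) A"
    proof (intro ballI impI)
      fix A assume Ac: "A \<in> carrier (M2s R s)"
        and n: "A \<notin> Units (M2s R s) \<and> \<one>\<^bsub>M2s R s\<^esub> \<ominus>\<^bsub>M2s R s\<^esub> A \<notin> Units (M2s R s)"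
      have "strongly_J_clean (M2s R s) A" using conjunct1[OF H2] Ac n by blast
      then obtain e where e: "idempotent_elem (M2s R s) e" "A \<otimes>\<^bsub>M2s R s\<^esub> e = e \<otimes>\<^bsub>M2s R s\<^esub> A"
          "A \<ominus>\<^bsub>M2s R s\<^esub> e \<in> jacobson (M2s R s)"
        unfolding strongly_J_clean_def by blast
      have "A \<ominus>\<^bsub>M2s R s\<^esub> e \<in> nilpotents (M2s R s)"
        using M.key2[OF Ac conjunct1[OF n] conjunct2[OF n] e(1) e(2) e(3) conjunct2[OF H2]] .
      then show "strongly_nil_clean (M2s R s) A"
        unfolding strongly_nil_clean_def using e(1,2) by blast
    qed
  qed
qed

end
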